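(* Let $A^l\in\mathfrak{so}(q_l)^{p_l}$, $l=1,\dots,n$, be tuples with linearly independent components whose corresponding two-step nilpotent Lie algebras are indecomposable. Then the Lie algebra corresponding to the iterated adjoin $C=(\cdots((A^1+_aA^2)+_aA^3)\cdots)+_aA^n$ is indecomposable. Likewise, the Lie algebra corresponding to $A^1+_a\{A^2,\dots,A^n\}$ is indecomposable.
   Context: Adjoin of two tuples: for $A\in\mathfrak{so}(q_1)^{n_1}$ and $B\in\mathfrak{so}(q_2)^m$, $A+_aB\in\mathfrak{so}(q_1+q_2)^{n_1+m-1}$ has components $\mathrm{diag}(A_i,0)$ for $i<n_1$, $\mathrm{diag}(A_{n_1},B_1)$ for $i=n_1$, and $\mathrm{diag}(0,B_{i-n_1+1})$ for $n_1<i\le n_1+m-1$. Multiple adjoin: $A+_a\{D^1,\dots,D^m\}$ is block diagonal with respect to $\mathbb R^{q_0}\oplus\mathbb R^{q_1}\oplus\dots\oplus\mathbb R^{q_m}$. Its first $p_0-1$ components are $\mathrm{diag}(A_l,0,\dots,0)$. Its $p_0$-th component is $\mathrm{diag}(A_{p_0},D^1_1,\dots,D^m_1)$. Then follow $D^1_2,\dots,D^1_{p_1},D^2_2,\dots,D^m_{p_m}$, each in its own block with zeros elsewhere. For $C\in\mathfrak{so}(q)^p$ with linearly independent components, the corresponding Lie algebra on $\mathbb R^{q+p}$ has $[e_i,e_j]=\sum_k(C_k)_{ij}e_{q+k}$ for $i,j\le q$ and all other brackets zero. Indecomposable means not a direct sum of two nonzero ideals. *)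

theory Defs
  imports Complex_Main
begin

text \<open>Real matrices are represented as functions nat => nat => real (0-based
indices). A q x q matrix is one whose entries vanish outside the square
{0..<q} x {0..<q}. A tuple in so(q)^p is a list of length p of such matrices.\<close>

type_synonym mat = "nat \<Rightarrow> nat \<Rightarrow> real"

definition is_so :: "nat \<Rightarrow> mat \<Rightarrow> bool" where
  "is_so q M \<longleftrightarrow> (\<forall>i j. M i j = - M j i) \<and> (\<forall>i j. q \<le> i \<or> q \<le> j \<longrightarrow> M i j = 0)"

definition so_tuple :: "nat \<Rightarrow> mat list \<Rightarrow> bool" where
  "so_tuple q A \<longleftrightarrow> (\<forall>M \<in> set A. is_so q M)"

definition lin_indep_tuple :: "mat list \<Rightarrow> bool" where
  "lin_indep_tuple A \<longleftrightarrow>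
     (\<forall>c :: nat \<Rightarrow> real. (\<forall>i j. (\<Sum>k<length A. c k * (A ! k) i j) = 0) \<longrightarrow> (\<forall>k<length A. c k = 0))"

definition shift_mat :: "nat \<Rightarrow> mat \<Rightarrow> mat" where
  "shift_mat s M = (\<lambda>i j. if s \<le> i \<and> s \<le> j then M (i - s) (j - s) else 0)"

definition mat_add :: "mat \<Rightarrow> mat \<Rightarrow> mat" where
  "mat_add M N = (\<lambda>i j. M i j + N i j)"

text \<open>Adjoin A +_a B for A in so(q1)^n1, B in so(q2)^m (n1, m >= 1).\<close>
definition adjoin :: "nat \<Rightarrow> mat list \<Rightarrow> mat list \<Rightarrow> mat list" where
  "adjoin q1 A B = butlast A @ [mat_add (last A) (shift_mat q1 (hd B))] @ map (shift_mat q1) (tl B)"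

text \<open>Iterated adjoin (...((A1 +_a A2) +_a A3)...) +_a An of a nonempty list of
pairs (q_l, A^l); returns the pair (q_1+...+q_n, C).\<close>
definition iter_adjoin :: "(nat \<times> mat list) list \<Rightarrow> nat \<times> mat list" where
  "iter_adjoin As = foldl (\<lambda>(q, C) (q', B). (q + q', adjoin q C B)) (hd As) (tl As)"

text \<open>Multiple adjoin A +_a {D^1,...,D^m} with A in so(q0)^p0 and
D^l in so(q_l)^(p_l), given as pairs (q_l, D^l).\<close>
definition madj_offset :: "nat \<Rightarrow> (nat \<times> mat list) list \<Rightarrow> nat \<Rightarrow> nat" where
  "madj_offset q0 Ds l = q0 + sum_list (map fst (take l Ds))"

definition multi_adjoin :: "nat \<Rightarrow> mat list \<Rightarrow> (nat \<times> mat list) list \<Rightarrow> mat list" where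
  "multi_adjoin q0 A Ds =
     butlast A
     @ [(\<lambda>i j. last A i j + (\<Sum>l<length Ds. shift_mat (madj_offset q0 Ds l) (hd (snd (Ds ! l))) i j))]
     @ concat (map (\<lambda>l. map (shift_mat (madj_offset q0 Ds l)) (tl (snd (Ds ! l)))) [0..<length Ds])"

text \<open>The two-step nilpotent Lie algebra on R^(q+p) associated with C in so(q)^p:
vectors are functions nat => real vanishing at indices >= q+p, and
[e_i,e_j] = sum_k (C_k)_ij e_(q+k) for i,j < q, all other brackets of basis vectors zero.\<close>
definition la_carrier :: "nat \<Rightarrow> mat list \<Rightarrow> (nat \<Rightarrow> real) set" where
  "la_carrier q C = {x. \<forall>m. q + length C \<le> m \<longrightarrow> x m = 0}"

definition la_bracket :: "nat \<Rightarrow> mat list \<Rightarrow> (nat \<Rightarrow> real) \<Rightarrow> (nat \<Rightarrow> real) \<Rightarrow> (nat \<Rightarrow> real)" where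
  "la_bracket q C x y = (\<lambda>m. if q \<le> m \<and> m < q + length C
      then (\<Sum>i<q. \<Sum>j<q. x i * y j * (C ! (m - q)) i j) else 0)"

definition la_ideal :: "nat \<Rightarrow> mat list \<Rightarrow> (nat \<Rightarrow> real) set \<Rightarrow> bool" where
  "la_ideal q C I \<longleftrightarrow>
     I \<subseteq> la_carrier q C \<and> (\<lambda>_. 0) \<in> I
     \<and> (\<forall>x\<in>I. \<forall>y\<in>I. (\<lambda>m. x m + y m) \<in> I)
     \<and> (\<forall>a::real. \<forall>x\<in>I. (\<lambda>m. a * x m) \<in> I)
     \<and> (\<forall>x\<in>la_carrier q C. \<forall>y\<in>I. la_bracket q C x y \<in> I)"

definition la_indecomposable :: "nat \<Rightarrow> mat list \<Rightarrow> bool" where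
  "la_indecomposable q C \<longleftrightarrow>
     \<not> (\<exists>I J. la_ideal q C I \<and> la_ideal q C J \<and> I \<noteq> {\<lambda>_. 0} \<and> J \<noteq> {\<lambda>_. 0}
            \<and> I \<inter> J = {\<lambda>_. 0}
            \<and> la_carrier q C = {(\<lambda>m. x m + y m) | x y. x \<in> I \<and> y \<in> J})"

end

theory Submission
  imports Defs
begin


definition vp :: "nat \<Rightarrow> (nat \<Rightarrow> real) \<Rightarrow> (nat \<Rightarrow> real)" where
  "vp q x = (\<lambda>i. if i < q then x i else 0)"

definition frm :: "nat \<Rightarrow> mat \<Rightarrow> (nat \<Rightarrow> real) \<Rightarrow> (nat \<Rightarrow> real) \<Rightarrow> real" where
  "frm q M y x = (\<Sum>i<q. \<Sum>j<q. y i * x j * M i j)"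

definition ev :: "nat \<Rightarrow> nat \<Rightarrow> real" where
  "ev n = (\<lambda>i. if i = n then 1 else 0)"

lemma sum_shift0: "(\<forall>i<a. g i = 0) \<Longrightarrow> (\<Sum>i<a+b. g i) = (\<Sum>i<b. g (a+i)::real)" for a b :: nat
  by (induction b) auto

lemma la_bracket_frm:
  "la_bracket q C x y = (\<lambda>m. if q \<le> m \<and> m < q + length C then frm q (C!(m-q)) x y else 0)"
  unfolding la_bracket_def frm_def by (rule refl)

lemma frm_cong: "(\<forall>i<q. y i = y' i) \<Longrightarrow> (\<forall>i<q. x i = x' i) \<Longrightarrow> frm q M y x = frm q M y' x'"
  unfolding frm_def by (intro sum.cong refl) auto

lemma frm_vp1[simp]: "frm q M (vp q y) x = frm q M y x"
  by (rule frm_cong) (auto simp: vp_def)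
lemma frm_vp2[simp]: "frm q M y (vp q x) = frm q M y x"
  by (rule frm_cong) (auto simp: vp_def)

lemma frm_add2: "frm q M y (\<lambda>m. x m + x' m) = frm q M y x + frm q M y x'"
  unfolding frm_def by (simp add: distrib_left distrib_right sum.distrib)
lemma frm_smul2: "frm q M y (\<lambda>m. a * x m) = a * frm q M y x"
  unfolding frm_def by (simp add: sum_distrib_left mult_ac)
lemma frm_zero1: "(\<forall>i<q. y i = 0) \<Longrightarrow> frm q M y x = 0"
  unfolding frm_def by simp
lemma frm_zero2: "(\<forall>i<q. x i = 0) \<Longrightarrow> frm q M y x = 0"
  unfolding frm_def by simp
lemma frm_matadd: "frm q (\<lambda>i j. M i j + N i j) y x = frm q M y x + frm q N y x"
  unfolding frm_def by (simp add: distrib_left sum.distrib)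

lemma is_so_zero: "is_so q M \<Longrightarrow> q \<le> i \<or> q \<le> j \<Longrightarrow> M i j = 0"
  unfolding is_so_def by blast

lemma is_so_skew: "is_so q M \<Longrightarrow> M i j = - M j i"
  unfolding is_so_def by blast

lemma frm_skew: "is_so q M \<Longrightarrow> frm q M x y = - frm q M y x"
proof -
  assume "is_so q M"
  then have s: "\<And>i j. M i j = - M j i" unfolding is_so_def by blast
  have "frm q M x y = (\<Sum>i<q. \<Sum>j<q. x i * y j * M i j)" by (simp add: frm_def)
  also have "\<dots> = (\<Sum>j<q. \<Sum>i<q. x i * y j * M i j)" by (rule sum.swap)
  also have "\<dots> = (\<Sum>j<q. \<Sum>i<q. - (y j * x i * M j i))"
  proof (intro sum.cong refl)
    fix j i show "x i * y j * M i j = - (y j * x i * M j i)" using s[of i j] by simp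
  qed
  also have "\<dots> = - frm q M y x" by (simp add: frm_def sum_negf)
  finally show ?thesis .
qed

lemma ev_mult: "ev a i * x = (if i = a then x else 0)"
  by (simp add: ev_def)

lemma if_mult0: "(if P then x else 0) * (y::real) = (if P then x * y else 0)"
  by simp

lemma sum_if_const: "(\<Sum>j\<in>S. if P then f j else 0) = (if P then (\<Sum>j\<in>S. f j) else (0::real))"
  by auto

lemma frm_ev: "a < q \<Longrightarrow> b < q \<Longrightarrow> frm q M (ev a) (ev b) = M a b"
  unfolding frm_def by (simp add: ev_mult if_mult0 sum_if_const sum.delta)

lemma lin_indep_frm:
  assumes "so_tuple q C" "lin_indep_tuple C"
    and "\<And>x y. (\<Sum>k<length C. c k * frm q (C!k) y x) = 0" and "k < length C"
  shows "c k = 0"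
proof -
  have "\<forall>i j. (\<Sum>k<length C. c k * (C ! k) i j) = 0"
  proof (intro allI)
    fix i j
    show "(\<Sum>k<length C. c k * (C ! k) i j) = 0"
    proof (cases "i < q \<and> j < q")
      case True
      have "(\<Sum>k<length C. c k * (C ! k) i j) = (\<Sum>k<length C. c k * frm q (C!k) (ev i) (ev j))"
        using True by (simp add: frm_ev)
      then show ?thesis using assms(3) by simp
    next
      case False
      have "\<And>k. k < length C \<Longrightarrow> (C ! k) i j = 0"
        using assms(1) False is_so_zero unfolding so_tuple_def by (metis not_le nth_mem)
      then show ?thesis by simp
    qed
  qed
  then show ?thesis using assms(2,4) unfolding lin_indep_tuple_def by blast
qed



definition has_proj :: "nat \<Rightarrow> mat list \<Rightarrow> ((nat \<Rightarrow> real) \<Rightarrow> (nat \<Rightarrow> real)) \<Rightarrow> bool" where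
  "has_proj q C P \<longleftrightarrow>
   (\<forall>x\<in>la_carrier q C. P x \<in> la_carrier q C) \<and>
   (\<forall>x\<in>la_carrier q C. \<forall>y\<in>la_carrier q C. P (\<lambda>m. x m + y m) = (\<lambda>m. P x m + P y m)) \<and>
   (\<forall>a. \<forall>x\<in>la_carrier q C. P (\<lambda>m. a * x m) = (\<lambda>m. a * P x m)) \<and>
   (\<forall>x\<in>la_carrier q C. P (P x) = P x) \<and>
   (\<forall>x\<in>la_carrier q C. \<forall>y\<in>la_carrier q C. P (la_bracket q C x y) = la_bracket q C x (P y)) \<and>
   (\<exists>x\<in>la_carrier q C. P x \<noteq> (\<lambda>_. 0)) \<and> (\<exists>x\<in>la_carrier q C. P x \<noteq> x)"

lemma car_add: "x \<in> la_carrier q C \<Longrightarrow> y \<in> la_carrier q C \<Longrightarrow> (\<lambda>m. x m + y m) \<in> la_carrier q C"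
  by (simp add: la_carrier_def)
lemma car_smul: "x \<in> la_carrier q C \<Longrightarrow> (\<lambda>m. a * x m) \<in> la_carrier q C"
  by (simp add: la_carrier_def)
lemma car_zero: "(\<lambda>_. 0) \<in> la_carrier q C"
  by (simp add: la_carrier_def)
lemma bracket_car: "la_bracket q C x y \<in> la_carrier q C"
  by (simp add: la_carrier_def la_bracket_def)
lemma bracket_add2: "la_bracket q C x (\<lambda>m. y m + z m) = (\<lambda>m. la_bracket q C x y m + la_bracket q C x z m)"
  by (auto simp: la_bracket_frm frm_add2)
lemma bracket_smul2: "la_bracket q C x (\<lambda>m. a * y m) = (\<lambda>m. a * la_bracket q C x y m)"
  by (auto simp: la_bracket_frm frm_smul2)
lemma bracket_zero2: "la_bracket q C x (\<lambda>_. 0) = (\<lambda>_. 0)"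
  by (auto simp: la_bracket_frm frm_zero2)

lemma decomp_to_proj:
  assumes "\<not> la_indecomposable q C"
  shows "\<exists>P. has_proj q C P"
proof -
  have "\<exists>I J. la_ideal q C I \<and> la_ideal q C J \<and> I \<noteq> {\<lambda>_. 0} \<and> J \<noteq> {\<lambda>_. 0}
            \<and> I \<inter> J = {\<lambda>_. 0}
            \<and> la_carrier q C = {(\<lambda>m. x m + y m) | x y. x \<in> I \<and> y \<in> J}"
    using assms unfolding la_indecomposable_def by (rule notnotD)
  then obtain I J where iI: "la_ideal q C I" and iJ: "la_ideal q C J" and nI: "I \<noteq> {\<lambda>_. 0}"
    and nJ: "J \<noteq> {\<lambda>_. 0}" and int: "I \<inter> J = {\<lambda>_. 0}"
    and sp: "la_carrier q C = {(\<lambda>m. x m + y m) | x y. x \<in> I \<and> y \<in> J}"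
    by (elim exE conjE)
  have I0: "(\<lambda>_. 0) \<in> I" and J0: "(\<lambda>_. 0) \<in> J" using iI iJ by (auto simp: la_ideal_def)
  have Iadd: "\<And>x y. x \<in> I \<Longrightarrow> y \<in> I \<Longrightarrow> (\<lambda>m. x m + y m) \<in> I"
    and Ism: "\<And>a x. x \<in> I \<Longrightarrow> (\<lambda>m. a * x m) \<in> I"
    and Ibr: "\<And>x y. x \<in> la_carrier q C \<Longrightarrow> y \<in> I \<Longrightarrow> la_bracket q C x y \<in> I"
    and Icar: "I \<subseteq> la_carrier q C"
    using iI by (auto simp: la_ideal_def)
  have Jadd: "\<And>x y. x \<in> J \<Longrightarrow> y \<in> J \<Longrightarrow> (\<lambda>m. x m + y m) \<in> J"
    and Jsm: "\<And>a x. x \<in> J \<Longrightarrow> (\<lambda>m. a * x m) \<in> J"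
    and Jbr: "\<And>x y. x \<in> la_carrier q C \<Longrightarrow> y \<in> J \<Longrightarrow> la_bracket q C x y \<in> J"
    and Jcar: "J \<subseteq> la_carrier q C"
    using iJ by (auto simp: la_ideal_def)
  have Isub: "(\<lambda>m. x m - y m) \<in> I" if "x \<in> I" "y \<in> I" for x y
  proof -
    have "(\<lambda>m. x m + (-1) * y m) \<in> I" using Iadd[OF that(1) Ism[where a="-1", OF that(2)]] by simp
    then show ?thesis by simp
  qed
  have Jsub: "(\<lambda>m. x m - y m) \<in> J" if "x \<in> J" "y \<in> J" for x y
  proof -
    have "(\<lambda>m. x m + (-1) * y m) \<in> J" using Jadd[OF that(1) Jsm[where a="-1", OF that(2)]] by simp
    then show ?thesis by simp
  qed
  have uniq: "i = i'" if "i \<in> I" "i' \<in> I" "j \<in> J" "j' \<in> J"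
      "(\<lambda>m. i m + j m) = (\<lambda>m. i' m + j' m)" for i i' j j'
  proof -
    have e: "\<And>m. i m - i' m = j' m - j m" using fun_cong[OF that(5)] by (simp add: algebra_simps)
    have "(\<lambda>m. i m - i' m) \<in> I" using Isub that by blast
    moreover have "(\<lambda>m. i m - i' m) \<in> J" unfolding e using Jsub that by blast
    ultimately have "(\<lambda>m. i m - i' m) = (\<lambda>_. 0)" using int by blast
    then have "\<And>m. i m - i' m = 0" by (metis (no_types))
    then show ?thesis by (intro ext) simp
  qed
  define P where "P x = (THE i. i \<in> I \<and> (\<exists>j\<in>J. x = (\<lambda>m. i m + j m)))" for x
  have Pchar: "P x = i" if "i \<in> I" "j \<in> J" "x = (\<lambda>m. i m + j m)" for x i j
    unfolding P_def
  proof (rule the_equality)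
    show "i \<in> I \<and> (\<exists>j\<in>J. x = (\<lambda>m. i m + j m))" using that by blast
  next
    fix i' assume "i' \<in> I \<and> (\<exists>j\<in>J. x = (\<lambda>m. i' m + j m))"
    then obtain j' where "i' \<in> I" "j' \<in> J" "x = (\<lambda>m. i' m + j' m)" by blast
    then show "i' = i" using uniq[of i' i j' j] that by simp
  qed
  have ex: "\<exists>i j. i \<in> I \<and> j \<in> J \<and> x = (\<lambda>m. i m + j m)" if "x \<in> la_carrier q C" for x
    using that sp by blast
  have PI: "P x \<in> I" "\<exists>j\<in>J. x = (\<lambda>m. P x m + j m)" if xc: "x \<in> la_carrier q C" for x
  proof -
    obtain i j where ij: "i \<in> I" "j \<in> J" "x = (\<lambda>m. i m + j m)" using ex[OF xc] by blast
    have "P x = i" by (rule Pchar[OF ij])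
    then show "P x \<in> I" "\<exists>j\<in>J. x = (\<lambda>m. P x m + j m)" using ij by auto
  qed
  have "has_proj q C P"
    unfolding has_proj_def
  proof (intro conjI ballI allI)
    fix x assume x: "x \<in> la_carrier q C"
    show "P x \<in> la_carrier q C" using PI(1)[OF x] Icar by blast
    show "P (P x) = P x"
      using Pchar[of "P x" "\<lambda>_. 0" "P x"] PI(1)[OF x] J0 by simp
  next
    fix x y assume x: "x \<in> la_carrier q C" and y: "y \<in> la_carrier q C"
    obtain j where j: "j \<in> J" "x = (\<lambda>m. P x m + j m)" using PI(2)[OF x] by blast
    obtain j' where j': "j' \<in> J" "y = (\<lambda>m. P y m + j' m)" using PI(2)[OF y] by blast
    show "P (\<lambda>m. x m + y m) = (\<lambda>m. P x m + P y m)"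
    proof (rule Pchar)
      show "(\<lambda>m. P x m + P y m) \<in> I" using Iadd PI(1) x y by blast
      show "(\<lambda>m. j m + j' m) \<in> J" using Jadd j j' by blast
      show "(\<lambda>m. x m + y m) = (\<lambda>m. P x m + P y m + (j m + j' m))"
        by (subst j(2), subst j'(2)) (simp add: algebra_simps)
    qed
    have "la_bracket q C x y = (\<lambda>m. la_bracket q C x (P y) m + la_bracket q C x j' m)"
      by (subst j'(2)) (rule bracket_add2)
    then show "P (la_bracket q C x y) = la_bracket q C x (P y)"
      by (rule Pchar[OF Ibr[OF x PI(1)[OF y]] Jbr[OF x j'(1)]])
  next
    fix a x assume x: "x \<in> la_carrier q C"
    obtain j where j: "j \<in> J" "x = (\<lambda>m. P x m + j m)" using PI(2)[OF x] by blast
    show "P (\<lambda>m. a * x m) = (\<lambda>m. a * P x m)"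
    proof (rule Pchar)
      show "(\<lambda>m. a * P x m) \<in> I" using Ism PI(1) x by blast
      show "(\<lambda>m. a * j m) \<in> J" using Jsm j by blast
      show "(\<lambda>m. a * x m) = (\<lambda>m. a * P x m + a * j m)"
        by (subst j(2)) (simp add: algebra_simps)
    qed
  next
    obtain i where i: "i \<in> I" "i \<noteq> (\<lambda>_. 0)" using nI I0 by blast
    have "P i = i" using Pchar[of i "\<lambda>_. 0" i] i J0 by simp
    then show "\<exists>x\<in>la_carrier q C. P x \<noteq> (\<lambda>_. 0)"
      using i Icar by (intro bexI[of _ i]) auto
  next
    obtain j where j: "j \<in> J" "j \<noteq> (\<lambda>_. 0)" using nJ J0 by blast
    have "P j = (\<lambda>_. 0)" using Pchar[of "\<lambda>_. 0" j j] j I0 by simp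
    then show "\<exists>x\<in>la_carrier q C. P x \<noteq> x"
      using j Jcar by (intro bexI[of _ j]) auto
  qed
  then show ?thesis by blast
qed

lemma proj_to_decomp:
  assumes "has_proj q C P"
  shows "\<not> la_indecomposable q C"
proof -
  let ?Car = "la_carrier q C"
  have Pc: "\<And>x. x \<in> ?Car \<Longrightarrow> P x \<in> ?Car"
    and Padd: "\<And>x y. x \<in> ?Car \<Longrightarrow> y \<in> ?Car \<Longrightarrow> P (\<lambda>m. x m + y m) = (\<lambda>m. P x m + P y m)"
    and Psm: "\<And>a x. x \<in> ?Car \<Longrightarrow> P (\<lambda>m. a * x m) = (\<lambda>m. a * P x m)"
    and Pid: "\<And>x. x \<in> ?Car \<Longrightarrow> P (P x) = P x"
    and Pbr: "\<And>x y. x \<in> ?Car \<Longrightarrow> y \<in> ?Car \<Longrightarrow> P (la_bracket q C x y) = la_bracket q C x (P y)"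
    and Pn0: "\<exists>x\<in>?Car. P x \<noteq> (\<lambda>_. 0)" and Pn1: "\<exists>x\<in>?Car. P x \<noteq> x"
    using assms unfolding has_proj_def by blast+
  have P0: "P (\<lambda>_. 0) = (\<lambda>_. 0)" using Psm[of "\<lambda>_. 0" 0] car_zero by simp
  have Psub: "P (\<lambda>m. x m - y m) = (\<lambda>m. P x m - P y m)" if "x \<in> ?Car" "y \<in> ?Car" for x y
  proof -
    have "P (\<lambda>m. x m + (-1) * y m) = (\<lambda>m. P x m + (-1) * P y m)"
      using Padd[OF that(1) car_smul[OF that(2), of "-1"]] Psm[where a="-1", OF that(2)] by simp
    then show ?thesis by simp
  qed
  have carsub: "(\<lambda>m. x m - y m) \<in> ?Car" if "x \<in> ?Car" "y \<in> ?Car" for x y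
    using that by (simp add: la_carrier_def)
  define I where "I = {x \<in> ?Car. P x = x}"
  define J where "J = {x \<in> ?Car. P x = (\<lambda>_. 0)}"
  have iI: "la_ideal q C I"
    unfolding la_ideal_def
  proof (intro conjI ballI allI)
    show "I \<subseteq> ?Car" unfolding I_def by blast
    show "(\<lambda>_. 0) \<in> I" unfolding I_def using P0 car_zero by simp
  next
    fix x y assume "x \<in> I" "y \<in> I"
    then show "(\<lambda>m. x m + y m) \<in> I" unfolding I_def using car_add Padd by simp
  next
    fix a x assume "x \<in> I"
    then show "(\<lambda>m. a * x m) \<in> I" unfolding I_def using car_smul Psm by simp
  next
    fix x y assume "x \<in> ?Car" "y \<in> I"
    then show "la_bracket q C x y \<in> I" unfolding I_def using bracket_car Pbr by simp
  qed
  have iJ: "la_ideal q C J"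
    unfolding la_ideal_def
  proof (intro conjI ballI allI)
    show "J \<subseteq> ?Car" unfolding J_def by blast
    show "(\<lambda>_. 0) \<in> J" unfolding J_def using P0 car_zero by simp
  next
    fix x y assume "x \<in> J" "y \<in> J"
    then show "(\<lambda>m. x m + y m) \<in> J" unfolding J_def using car_add Padd by simp
  next
    fix a x assume "x \<in> J"
    then show "(\<lambda>m. a * x m) \<in> J" unfolding J_def using car_smul Psm by simp
  next
    fix x y assume "x \<in> ?Car" "y \<in> J"
    then show "la_bracket q C x y \<in> J" unfolding J_def using bracket_car Pbr bracket_zero2 by simp
  qed
  have nI: "I \<noteq> {\<lambda>_. 0}"
  proof
    assume h: "I = {\<lambda>_. 0}"
    obtain x where "x \<in> ?Car" "P x \<noteq> (\<lambda>_. 0)" using Pn0 by blast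
    then have "P x \<in> I" using Pc Pid unfolding I_def by blast
    then show False using h \<open>P x \<noteq> (\<lambda>_. 0)\<close> by blast
  qed
  have nJ: "J \<noteq> {\<lambda>_. 0}"
  proof
    assume h: "J = {\<lambda>_. 0}"
    obtain x where x: "x \<in> ?Car" "P x \<noteq> x" using Pn1 by blast
    have "(\<lambda>m. x m - P x m) \<in> J" unfolding J_def
      using Psub[OF x(1) Pc[OF x(1)]] Pid[OF x(1)] carsub x(1) Pc by auto
    then have "(\<lambda>m. x m - P x m) = (\<lambda>_. 0)" using h by blast
    then have "\<And>m. x m - P x m = 0" by (metis (no_types))
    then have "x = P x" by (intro ext) simp
    then show False using x by simp
  qed
  have int: "I \<inter> J = {\<lambda>_. 0}"
    unfolding I_def J_def using P0 car_zero by auto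
  have sp: "?Car = {(\<lambda>m. x m + y m) | x y. x \<in> I \<and> y \<in> J}"
  proof (intro equalityI subsetI)
    fix x assume x: "x \<in> ?Car"
    have "P x \<in> I" unfolding I_def using Pc Pid x by blast
    moreover have "(\<lambda>m. x m - P x m) \<in> J" unfolding J_def
      using Psub[OF x Pc[OF x]] Pid[OF x] carsub x Pc by auto
    moreover have "x = (\<lambda>m. P x m + (x m - P x m))" by simp
    ultimately show "x \<in> {(\<lambda>m. x m + y m) | x y. x \<in> I \<and> y \<in> J}"
      by (intro CollectI exI[of _ "P x"] exI[of _ "\<lambda>m. x m - P x m"]) simp
  next
    fix z assume "z \<in> {(\<lambda>m. x m + y m) | x y. x \<in> I \<and> y \<in> J}"
    then show "z \<in> ?Car" unfolding I_def J_def using car_add by blast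
  qed
  show ?thesis unfolding la_indecomposable_def not_not
    by (intro exI[of _ I] exI[of _ J] conjI iI iJ nI nJ int sp)
qed



definition kfree :: "nat \<Rightarrow> mat list \<Rightarrow> bool" where
  "kfree q C \<longleftrightarrow> (\<forall>v. (\<forall>k<length C. \<forall>y. frm q (C!k) y v = 0) \<longrightarrow> (\<forall>i<q. v i = 0))"

lemma vp_car: "vp q x \<in> la_carrier q C"
  by (simp add: la_carrier_def vp_def)

lemma vp_vp[simp]: "vp q (vp q x) = vp q x"
  by (auto simp: vp_def)

lemma vp_add: "vp q (\<lambda>m. x m + y m) = (\<lambda>m. vp q x m + vp q y m)"
  by (auto simp: vp_def)
lemma vp_smul: "vp q (\<lambda>m. a * x m) = (\<lambda>m. a * vp q x m)"
  by (auto simp: vp_def)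

lemma ev_car: "j < length C \<Longrightarrow> ev (q + j) \<in> la_carrier q C"
  by (simp add: la_carrier_def ev_def)

lemma indec_kfree:
  assumes ne: "C \<noteq> []" and ind: "la_indecomposable q C"
  shows "kfree q C"
  unfolding kfree_def
proof (intro allI impI)
  fix v i assume kv: "\<forall>k<length C. \<forall>y. frm q (C!k) y v = 0" and iq: "i < q"
  show "v i = 0"
  proof (rule ccontr)
    assume vi: "v i \<noteq> 0"
    define w where "w = vp q v"
    define P where "P x = (\<lambda>m. (x i / v i) * w m)" for x :: "nat \<Rightarrow> real"
    have wi: "w i = v i" using iq by (simp add: w_def vp_def)
    have fw: "frm q (C!k) x w = 0" if "k < length C" for k x
      unfolding w_def frm_vp2 using kv that by blast
    have bw: "la_bracket q C x w = (\<lambda>_. 0)" for x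
      unfolding la_bracket_frm
    proof (rule ext)
      fix m show "(if q \<le> m \<and> m < q + length C then frm q (C ! (m - q)) x w else 0) = 0"
        using fw[of "m - q" x] by auto
    qed
    have bi: "la_bracket q C x y i = 0" for x y
      using iq by (simp add: la_bracket_frm)
    have "has_proj q C P"
      unfolding has_proj_def
    proof (intro conjI ballI allI)
      fix x assume "x \<in> la_carrier q C"
      show "P x \<in> la_carrier q C" by (simp add: P_def la_carrier_def w_def vp_def)
      show "P (P x) = P x" using vi by (simp add: P_def wi)
    next
      fix x y assume "x \<in> la_carrier q C" "y \<in> la_carrier q C"
      show "P (\<lambda>m. x m + y m) = (\<lambda>m. P x m + P y m)"
        by (simp add: P_def add_divide_distrib distrib_right)
      show "P (la_bracket q C x y) = la_bracket q C x (P y)"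
        unfolding P_def bracket_smul2 bw bi by simp
    next
      fix a x assume "x \<in> la_carrier q C"
      show "P (\<lambda>m. a * x m) = (\<lambda>m. a * P x m)" by (simp add: P_def mult.assoc)
    next
      have "P w = w" using vi by (simp add: P_def wi)
      moreover have "w \<noteq> (\<lambda>_. 0)" using wi vi by (metis (mono_tags))
      ultimately show "\<exists>x\<in>la_carrier q C. P x \<noteq> (\<lambda>_. 0)"
        by (intro bexI[of _ w]) (auto simp: w_def vp_car)
    next
      have e: "ev q \<in> la_carrier q C" using ev_car[of 0 C q] ne by simp
      have "P (ev q) = (\<lambda>_. 0)" using iq by (simp add: P_def ev_def)
      moreover have "ev q \<noteq> (\<lambda>_. 0)" by (metis ev_def zero_neq_one)
      ultimately show "\<exists>x\<in>la_carrier q C. P x \<noteq> x" using e by (intro bexI[of _ "ev q"]) auto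
    qed
    then show False using proj_to_decomp ind by blast
  qed
qed

definition esplit0 :: "nat \<Rightarrow> mat list \<Rightarrow> ((nat \<Rightarrow> real) \<Rightarrow> (nat \<Rightarrow> real)) \<Rightarrow> (nat \<Rightarrow> nat \<Rightarrow> real) \<Rightarrow> bool" where
  "esplit0 q C E M \<longleftrightarrow> (\<forall>x. E x = E (vp q x)) \<and> (\<forall>x. vp q (E x) = E x)
     \<and> (\<forall>x y. E (\<lambda>m. x m + y m) = (\<lambda>m. E x m + E y m)) \<and> (\<forall>a x. E (\<lambda>m. a * x m) = (\<lambda>m. a * E x m))
     \<and> (\<forall>x. E (E x) = E x)
     \<and> (\<forall>k<length C. \<forall>x y. frm q (C!k) y (E x) = (\<Sum>j<length C. M k j * frm q (C!j) y x))"

lemma sum_ev: "(\<Sum>j<p. f j * ev (q + j) m) = (if q \<le> m \<and> m < q + p then f (m - q) else (0::real))"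
proof (cases "q \<le> m")
  case True
  have "(\<Sum>j<p. f j * ev (q + j) m) = (\<Sum>j<p. if j = m - q then f j else 0)"
    using True by (intro sum.cong refl) (auto simp: ev_def)
  also have "\<dots> = (if m - q < p then f (m - q) else 0)" by (simp add: sum.delta)
  also have "\<dots> = (if q \<le> m \<and> m < q + p then f (m - q) else 0)" using True by auto
  finally show ?thesis .
next
  case False
  then show ?thesis by (simp add: ev_def)
qed

lemma bracket_ev: "la_bracket q C x y = (\<lambda>m. \<Sum>j<length C. frm q (C!j) x y * ev (q + j) m)"
  by (simp add: la_bracket_frm sum_ev)

lemma esplit_triv:
  assumes so: "so_tuple q C" and li: "lin_indep_tuple C" and ind: "la_indecomposable q C"
    and es: "esplit0 q C E M"
  shows "(\<forall>x. E x = (\<lambda>_. 0)) \<or> (\<forall>x. E x = vp q x)"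
proof (rule ccontr)
  assume "\<not> ?thesis"
  then obtain x1 x2 where x1: "E x1 \<noteq> (\<lambda>_. 0)" and x2: "E x2 \<noteq> vp q x2" by blast
  let ?p = "length C"
  have Ev: "\<And>x. E x = E (vp q x)" and vE: "\<And>x. vp q (E x) = E x"
    and Eadd: "\<And>x y. E (\<lambda>m. x m + y m) = (\<lambda>m. E x m + E y m)"
    and Esm: "\<And>a x. E (\<lambda>m. a * x m) = (\<lambda>m. a * E x m)"
    and Eid: "\<And>x. E (E x) = E x"
    and rel: "\<And>k x y. k < ?p \<Longrightarrow> frm q (C!k) y (E x) = (\<Sum>j<?p. M k j * frm q (C!j) y x)"
    using es unfolding esplit0_def by blast+
  have E0: "E (\<lambda>_. 0) = (\<lambda>_. 0)" using Esm[of 0 "\<lambda>_. 0"] by simp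
  have Eq: "E x m = 0" if "q \<le> m" for x m
    using vE[of x] that by (metis vp_def not_le)
  have Midem: "(\<Sum>l<?p. M k l * M l j) = M k j" if k: "k < ?p" and j: "j < ?p" for k j
  proof -
    define c where "c l = (\<Sum>l'<?p. M k l' * M l' l) - M k l" for l
    have "(\<Sum>l<?p. c l * frm q (C!l) y x) = 0" for x y
    proof -
      have "(\<Sum>l<?p. (\<Sum>l'<?p. M k l' * M l' l) * frm q (C!l) y x)
          = (\<Sum>l<?p. \<Sum>l'<?p. M k l' * (M l' l * frm q (C!l) y x))"
        by (simp add: sum_distrib_right mult.assoc)
      also have "\<dots> = (\<Sum>l'<?p. \<Sum>l<?p. M k l' * (M l' l * frm q (C!l) y x))"
        by (rule sum.swap)
      also have "\<dots> = (\<Sum>l'<?p. M k l' * frm q (C!l') y (E x))"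
        by (simp add: sum_distrib_left[symmetric] rel)
      also have "\<dots> = frm q (C!k) y (E (E x))" using rel[OF k, where x="E x" and y=y] by simp
      also have "\<dots> = (\<Sum>l<?p. M k l * frm q (C!l) y x)" using rel[OF k] Eid by simp
      finally show ?thesis unfolding c_def by (simp add: left_diff_distrib sum_subtractf)
    qed
    then have "c j = 0" using lin_indep_frm[OF so li _ j, of c] by blast
    then show ?thesis unfolding c_def by simp
  qed
  define P where "P x = (\<lambda>m. if m < q then E x m else if m < q + ?p then (\<Sum>j<?p. M (m - q) j * x (q + j)) else 0)" for x
  have vpP: "vp q (P x) = E x" for x
    by (auto simp: vp_def P_def fun_eq_iff Eq)
  have "has_proj q C P"
    unfolding has_proj_def
  proof (intro conjI ballI allI)
    fix x assume "x \<in> la_carrier q C"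
    show "P x \<in> la_carrier q C" by (simp add: P_def la_carrier_def)
    show "P (P x) = P x"
    proof (rule ext)
      fix m
      show "P (P x) m = P x m"
      proof (cases "m < q")
        case True
        have "E (P x) = E x" using Ev[of "P x"] vpP Eid by simp
        then show ?thesis using True by (simp add: P_def)
      next
        case False
        have "(\<Sum>j<?p. M (m - q) j * P x (q + j)) = (\<Sum>j<?p. M (m - q) j * (\<Sum>l<?p. M j l * x (q + l)))"
          by (intro sum.cong refl) (simp add: P_def)
        also have "\<dots> = (\<Sum>j<?p. \<Sum>l<?p. M (m - q) j * M j l * x (q + l))"
          by (simp add: sum_distrib_left mult.assoc)
        also have "\<dots> = (\<Sum>l<?p. \<Sum>j<?p. M (m - q) j * M j l * x (q + l))" by (rule sum.swap)
        also have "\<dots> = (\<Sum>l<?p. (\<Sum>j<?p. M (m - q) j * M j l) * x (q + l))"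
          by (simp add: sum_distrib_right)
        also have "\<dots> = (\<Sum>l<?p. M (m - q) l * x (q + l))" if "m < q + ?p"
          using that False by (intro sum.cong refl) (simp add: Midem)
        finally show ?thesis using False by (auto simp: P_def)
      qed
    qed
  next
    fix x y assume "x \<in> la_carrier q C" "y \<in> la_carrier q C"
    show "P (\<lambda>m. x m + y m) = (\<lambda>m. P x m + P y m)"
      by (auto simp: P_def Eadd distrib_left sum.distrib fun_eq_iff)
    show "P (la_bracket q C x y) = la_bracket q C x (P y)"
    proof (rule ext)
      fix m
      show "P (la_bracket q C x y) m = la_bracket q C x (P y) m"
      proof (cases "m < q")
        case True
        have "vp q (la_bracket q C x y) = (\<lambda>_. 0)" by (auto simp: vp_def la_bracket_frm)
        then have "E (la_bracket q C x y) = (\<lambda>_. 0)" using Ev[of "la_bracket q C x y"] E0 by simp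
        then show ?thesis using True by (simp add: P_def la_bracket_frm)
      next
        case False
        have "frm q (C ! (m - q)) x (P y) = frm q (C ! (m - q)) x (E y)"
          by (rule frm_cong) (auto simp: P_def)
        also have "\<dots> = (\<Sum>j<?p. M (m - q) j * frm q (C!j) x y)" if "m < q + ?p"
          using rel[of "m - q"] that False by simp
        finally show ?thesis using False by (auto simp: P_def la_bracket_frm)
      qed
    qed
  next
    fix a x assume "x \<in> la_carrier q C"
    show "P (\<lambda>m. a * x m) = (\<lambda>m. a * P x m)"
      by (auto simp: P_def Esm sum_distrib_left mult_ac fun_eq_iff)
  next
    have "P (vp q x1) \<noteq> (\<lambda>_. 0)"
    proof
      assume "P (vp q x1) = (\<lambda>_. 0)"
      then have "vp q (P (vp q x1)) = (\<lambda>_. 0)" by (simp add: vp_def)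
      then show False using vpP Ev x1 by metis
    qed
    then show "\<exists>x\<in>la_carrier q C. P x \<noteq> (\<lambda>_. 0)" by (intro bexI[of _ "vp q x1"] vp_car)
  next
    have "P (vp q x2) \<noteq> vp q x2"
    proof
      assume "P (vp q x2) = vp q x2"
      then have "vp q (P (vp q x2)) = vp q x2" by simp
      then show False using vpP Ev x2 by metis
    qed
    then show "\<exists>x\<in>la_carrier q C. P x \<noteq> x" by (intro bexI[of _ "vp q x2"] vp_car)
  qed
  then show False using proj_to_decomp ind by blast
qed



definition zp :: "nat \<Rightarrow> (nat \<Rightarrow> real) \<Rightarrow> (nat \<Rightarrow> real)" where
  "zp q x = (\<lambda>m. if m < q then 0 else x m)"

lemma vp_zp: "x = (\<lambda>m. vp q x m + zp q x m)"
  by (auto simp: vp_def zp_def)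

lemma zp_car: "x \<in> la_carrier q C \<Longrightarrow> zp q x \<in> la_carrier q C"
  by (simp add: la_carrier_def zp_def)

lemma zp_low: "i < q \<Longrightarrow> zp q x i = 0"
  by (simp add: zp_def)

lemma sumev_car: "n \<le> length C \<Longrightarrow> (\<lambda>m. \<Sum>j<n. c j * ev (q + j) m) \<in> la_carrier q C"
  by (auto simp: la_carrier_def ev_def)

lemma proj_esplit:
  assumes so: "so_tuple q C" and li: "lin_indep_tuple C" and kf: "kfree q C"
    and hp: "has_proj q C P"
  shows "\<exists>E M. esplit0 q C E M \<and> (\<exists>x. E x \<noteq> (\<lambda>_. 0)) \<and> (\<exists>x. E x \<noteq> vp q x)"
proof -
  let ?Car = "la_carrier q C"
  let ?p = "length C"
  have Pc: "\<And>x. x \<in> ?Car \<Longrightarrow> P x \<in> ?Car"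
    and Padd: "\<And>x y. x \<in> ?Car \<Longrightarrow> y \<in> ?Car \<Longrightarrow> P (\<lambda>m. x m + y m) = (\<lambda>m. P x m + P y m)"
    and Psm: "\<And>a x. x \<in> ?Car \<Longrightarrow> P (\<lambda>m. a * x m) = (\<lambda>m. a * P x m)"
    and Pid: "\<And>x. x \<in> ?Car \<Longrightarrow> P (P x) = P x"
    and Pbr: "\<And>x y. x \<in> ?Car \<Longrightarrow> y \<in> ?Car \<Longrightarrow> P (la_bracket q C x y) = la_bracket q C x (P y)"
    and Pn0: "\<exists>x\<in>?Car. P x \<noteq> (\<lambda>_. 0)" and Pn1: "\<exists>x\<in>?Car. P x \<noteq> x"
    using hp unfolding has_proj_def by blast+
  have P0: "P (\<lambda>_. 0) = (\<lambda>_. 0)" using Psm[of "\<lambda>_. 0" 0] car_zero by simp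
  have Pcar0: "P x m = 0" if "x \<in> ?Car" "q + ?p \<le> m" for x m
    using Pc[OF that(1)] that(2) by (simp add: la_carrier_def)
  have Psum: "P (\<lambda>m. \<Sum>j<n. c j * ev (q + j) m) = (\<lambda>m. \<Sum>j<n. c j * P (ev (q + j)) m)"
    if "n \<le> ?p" for n c
    using that
  proof (induction n)
    case 0
    then show ?case using P0 by simp
  next
    case (Suc n)
    have "P (\<lambda>m. \<Sum>j<Suc n. c j * ev (q + j) m)
        = P (\<lambda>m. (\<Sum>j<n. c j * ev (q + j) m) + c n * ev (q + n) m)" by simp
    also have "\<dots> = (\<lambda>m. P (\<lambda>m. \<Sum>j<n. c j * ev (q + j) m) m + P (\<lambda>m. c n * ev (q + n) m) m)"
      using Suc.prems by (intro Padd sumev_car car_smul ev_car) auto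
    also have "\<dots> = (\<lambda>m. \<Sum>j<Suc n. c j * P (ev (q + j)) m)"
      using Suc by (simp add: Psm ev_car)
    finally show ?case .
  qed
  have central: "P z i = 0" if z: "z \<in> ?Car" "\<forall>i<q. z i = 0" and i: "i < q" for z i
  proof -
    have "frm q (C!k) y (P z) = 0" if k: "k < ?p" for k y
    proof -
      have "la_bracket q C (vp q y) z = (\<lambda>_. 0)"
        using z(2) by (auto simp: la_bracket_frm frm_zero2)
      then have "P (la_bracket q C (vp q y) z) = (\<lambda>_. 0)" using P0 by simp
      then have "la_bracket q C (vp q y) (P z) = (\<lambda>_. 0)" using Pbr[OF vp_car z(1)] by simp
      then have "la_bracket q C (vp q y) (P z) (q + k) = 0" by simp
      then show ?thesis using k by (simp add: la_bracket_frm)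
    qed
    then show ?thesis using kf i unfolding kfree_def by blast
  qed
  define M where "M k j = P (ev (q + j)) (q + k)" for k j
  have Pz: "P z m = (if q \<le> m \<and> m < q + ?p then (\<Sum>l<?p. M (m - q) l * z (q + l)) else 0)"
    if z: "z \<in> ?Car" "\<forall>i<q. z i = 0" for z m
  proof -
    have zz: "z = (\<lambda>m. \<Sum>l<?p. z (q + l) * ev (q + l) m)"
    proof (rule ext)
      fix m show "z m = (\<Sum>l<?p. z (q + l) * ev (q + l) m)"
        unfolding sum_ev using z by (auto simp: la_carrier_def)
    qed
    have "P z m = (\<Sum>l<?p. z (q + l) * P (ev (q + l)) m)"
      by (subst zz, subst Psum) auto
    also have "\<dots> = (if q \<le> m \<and> m < q + ?p then (\<Sum>l<?p. M (m - q) l * z (q + l)) else 0)"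
    proof (cases "m < q")
      case True
      have "\<And>l. l < ?p \<Longrightarrow> P (ev (q + l)) m = 0"
        using central[OF ev_car _ True] by (auto simp: ev_def)
      then show ?thesis using True by simp
    next
      case False
      show ?thesis
      proof (cases "m < q + ?p")
        case True
        then show ?thesis using False by (auto simp: M_def mult.commute intro!: sum.cong)
      next
        case F2: False
        then show ?thesis using Pcar0[OF ev_car] by simp
      qed
    qed
    finally show ?thesis .
  qed
  define E where "E x = vp q (P (vp q x))" for x
  have Elow: "E x i = P (vp q x) i" if "i < q" for x i
    using that by (simp add: E_def vp_def)
  have vpE: "vp q (E x) = E x" for x by (simp add: E_def)
  have rel: "frm q (C!k) y (E x) = (\<Sum>j<?p. M k j * frm q (C!j) y x)" if k: "k < ?p" for k x y
  proof -
    have "frm q (C!k) y (E x) = frm q (C!k) (vp q y) (P (vp q x))"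
      by (rule frm_cong) (auto simp: Elow vp_def)
    also have "\<dots> = la_bracket q C (vp q y) (P (vp q x)) (q + k)"
      using k by (simp add: la_bracket_frm)
    also have "\<dots> = P (la_bracket q C (vp q y) (vp q x)) (q + k)"
      using Pbr[OF vp_car vp_car] by simp
    also have "\<dots> = (\<Sum>j<?p. frm q (C!j) (vp q y) (vp q x) * P (ev (q + j)) (q + k))"
      unfolding bracket_ev by (subst Psum) auto
    also have "\<dots> = (\<Sum>j<?p. M k j * frm q (C!j) y x)"
      by (simp add: M_def mult.commute)
    finally show ?thesis .
  qed
  have Eidem: "E (E x) = E x" for x
  proof -
    define w where "w = P (vp q x)"
    have wc: "w \<in> ?Car" unfolding w_def by (rule Pc[OF vp_car])
    have Pw: "P w = w" unfolding w_def by (rule Pid[OF vp_car])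
    have "P w = (\<lambda>m. P (vp q w) m + P (zp q w) m)"
      by (subst vp_zp[of w q]) (rule Padd[OF vp_car zp_car[OF wc]])
    then have "w i = P (vp q w) i" if "i < q" for i
      using central[OF zp_car[OF wc], of i] that Pw by (simp add: zp_low fun_eq_iff)
    then have "vp q (P (vp q w)) = vp q w" by (auto simp: vp_def)
    then show ?thesis unfolding E_def w_def by simp
  qed
  have es: "esplit0 q C E M"
    unfolding esplit0_def
  proof (intro conjI allI impI)
    fix x show "E x = E (vp q x)" by (simp add: E_def)
    show "vp q (E x) = E x" by (rule vpE)
    show "E (E x) = E x" by (rule Eidem)
  next
    fix x y show "E (\<lambda>m. x m + y m) = (\<lambda>m. E x m + E y m)"
      unfolding E_def vp_add by (simp add: Padd vp_car vp_add)
  next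
    fix a x show "E (\<lambda>m. a * x m) = (\<lambda>m. a * E x m)"
      unfolding E_def vp_smul by (simp add: Psm vp_car vp_smul)
  next
    fix k x y assume "k < ?p"
    then show "frm q (C!k) y (E x) = (\<Sum>j<?p. M k j * frm q (C!j) y x)" by (rule rel)
  qed
  have n0: "\<exists>x. E x \<noteq> (\<lambda>_. 0)"
  proof (rule ccontr)
    assume "\<not> ?thesis"
    then have E0: "\<And>x. E x = (\<lambda>_. 0)" by blast
    have M0: "M k j = 0" if "k < ?p" "j < ?p" for k j
    proof (rule lin_indep_frm[OF so li _ that(2)])
      fix x y show "(\<Sum>j<?p. M k j * frm q (C!j) y x) = 0"
        using rel[OF that(1), of y x] E0 by (simp add: frm_zero2)
    qed
    have Pz0: "P z = (\<lambda>_. 0)" if "z \<in> ?Car" "\<forall>i<q. z i = 0" for z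
      using Pz[OF that] M0 by (auto simp: fun_eq_iff)
    obtain x where x: "x \<in> ?Car" "P x \<noteq> (\<lambda>_. 0)" using Pn0 by blast
    define w where "w = P (vp q x)"
    have wc: "w \<in> ?Car" unfolding w_def by (rule Pc[OF vp_car])
    have "\<forall>i<q. w i = 0" using E0[of x] Elow w_def by (metis fun_cong)
    then have "P w = (\<lambda>_. 0)" using Pz0 wc by blast
    moreover have "P w = w" unfolding w_def by (rule Pid[OF vp_car])
    ultimately have w0: "P (vp q x) = (\<lambda>_. 0)" unfolding w_def by simp
    have "P (zp q x) = (\<lambda>_. 0)" using Pz0[OF zp_car[OF x(1)]] by (simp add: zp_low)
    moreover have "P x = (\<lambda>m. P (vp q x) m + P (zp q x) m)"
      by (subst vp_zp[of x q]) (rule Padd[OF vp_car zp_car[OF x(1)]])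
    ultimately show False using w0 x(2) by simp
  qed
  have n1: "\<exists>x. E x \<noteq> vp q x"
  proof (rule ccontr)
    assume "\<not> ?thesis"
    then have E1: "\<And>x. E x = vp q x" by blast
    have M1: "M k j = (if j = k then 1 else 0)" if k: "k < ?p" and j: "j < ?p" for k j
    proof -
      have "M k j - (if j = k then 1 else 0) = 0"
      proof (rule lin_indep_frm[OF so li _ j])
        fix x y
        have "(\<Sum>j<?p. (M k j - (if j = k then 1 else 0)) * frm q (C!j) y x)
            = (\<Sum>j<?p. M k j * frm q (C!j) y x) - (\<Sum>j<?p. (if j = k then frm q (C!j) y x else 0))"
        proof -
          have "\<And>j. (M k j - (if j = k then 1 else 0)) * frm q (C!j) y x
                 = M k j * frm q (C!j) y x - (if j = k then frm q (C!j) y x else 0)"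
            by (simp add: left_diff_distrib)
          then show ?thesis by (simp add: sum_subtractf)
        qed
        also have "\<dots> = 0" using rel[OF k, of y x] E1 k by (simp add: sum.delta)
        finally show "(\<Sum>j<?p. (M k j - (if j = k then 1 else 0)) * frm q (C!j) y x) = 0" .
      qed
      then show ?thesis by simp
    qed
    have Pz1: "P z = z" if zc: "z \<in> ?Car" and zl: "\<forall>i<q. z i = 0" for z
    proof (rule ext)
      fix m
      show "P z m = z m"
      proof (cases "q \<le> m \<and> m < q + ?p")
        case True
        have "(\<Sum>l<?p. M (m - q) l * z (q + l)) = (\<Sum>l<?p. if l = m - q then z (q + l) else 0)"
        proof (intro sum.cong refl)
          fix l assume "l \<in> {..<?p}"
          then show "M (m - q) l * z (q + l) = (if l = m - q then z (q + l) else 0)"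
            using M1[of "m - q" l] True by auto
        qed
        also have "\<dots> = z m" using True by (auto simp: sum.delta)
        finally show ?thesis using Pz[OF zc zl] True by simp
      next
        case False
        then show ?thesis using Pz[OF zc zl, of m] zl zc by (auto simp: la_carrier_def)
      qed
    qed
    obtain x where x: "x \<in> ?Car" "P x \<noteq> x" using Pn1 by blast
    define w where "w = P (vp q x)"
    have wc: "w \<in> ?Car" unfolding w_def by (rule Pc[OF vp_car])
    have Pw: "P w = w" unfolding w_def by (rule Pid[OF vp_car])
    have vw: "vp q w = vp q x" using E1[of x] unfolding E_def w_def .
    have "P w = (\<lambda>m. P (vp q w) m + P (zp q w) m)"
      by (subst vp_zp[of w q]) (rule Padd[OF vp_car zp_car[OF wc]])
    also have "\<dots> = (\<lambda>m. w m + zp q w m)"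
    proof -
      have "P (vp q w) = w" using vw w_def by simp
      then show ?thesis using Pz1[OF zp_car[OF wc]] by (simp add: zp_low)
    qed
    finally have "\<And>m. zp q w m = 0" using Pw by (metis add_cancel_left_right fun_cong)
    then have ww: "w = vp q x" using vp_zp[of w q] vw by simp
    have "P x = (\<lambda>m. P (vp q x) m + P (zp q x) m)"
      by (subst vp_zp[of x q]) (rule Padd[OF vp_car zp_car[OF x(1)]])
    also have "\<dots> = (\<lambda>m. vp q x m + zp q x m)"
      using Pz1[OF zp_car[OF x(1)]] ww w_def by (simp add: zp_low)
    also have "\<dots> = x" by (rule vp_zp[symmetric])
    finally show False using x(2) by simp
  qed
  show ?thesis using es n0 n1 by blast
qed



definition adj_at :: "nat \<Rightarrow> nat \<Rightarrow> mat list \<Rightarrow> mat list \<Rightarrow> mat list" where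
  "adj_at t qA A B = A[t := mat_add (A!t) (shift_mat qA (hd B))] @ map (shift_mat qA) (tl B)"

definition un :: "nat \<Rightarrow> (nat \<Rightarrow> real) \<Rightarrow> (nat \<Rightarrow> real)" where
  "un s x = (\<lambda>i. x (s + i))"
definition sh :: "nat \<Rightarrow> (nat \<Rightarrow> real) \<Rightarrow> (nat \<Rightarrow> real)" where
  "sh s x = (\<lambda>i. if s \<le> i then x (i - s) else 0)"

lemma un_sh[simp]: "un s (sh s x) = x" by (simp add: un_def sh_def)
lemma sh_add: "sh s (\<lambda>m. x m + y m) = (\<lambda>m. sh s x m + sh s y m)" by (auto simp: sh_def)
lemma sh_smul: "sh s (\<lambda>m. a * x m) = (\<lambda>m. a * sh s x m)" by (auto simp: sh_def)
lemma un_add: "un s (\<lambda>m. x m + y m) = (\<lambda>m. un s x m + un s y m)" by (auto simp: un_def)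
lemma un_smul: "un s (\<lambda>m. a * x m) = (\<lambda>m. a * un s x m)" by (auto simp: un_def)
lemma sh_low: "i < s \<Longrightarrow> sh s x i = 0" by (simp add: sh_def)
lemma un_vp0: "un s (vp s y) i = 0" by (simp add: un_def vp_def)
lemma un_apply: "un s x i = x (s + i)" by (simp add: un_def)
lemma vp_split: "vp (a + b) x = (\<lambda>m. vp a x m + sh a (vp b (un a x)) m)"
  by (auto simp: vp_def sh_def un_def fun_eq_iff)

lemma frm_A:
  assumes "is_so qA M"
  shows "frm (qA + qB) M y x = frm qA M y x"
proof -
  have z: "M i j = 0" if "qA \<le> i \<or> qA \<le> j" for i j using is_so_zero[OF assms that] .
  have "frm (qA + qB) M y x = (\<Sum>i<qA. \<Sum>j<qA+qB. y i * x j * M i j)"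
    unfolding frm_def by (rule sum.mono_neutral_right) (auto simp: z)
  also have "\<dots> = (\<Sum>i<qA. \<Sum>j<qA. y i * x j * M i j)"
    by (intro sum.cong refl sum.mono_neutral_right) (auto simp: z)
  finally show ?thesis by (simp add: frm_def)
qed

lemma frm_B: "frm (qA + qB) (shift_mat qA N) y x = frm qB N (un qA y) (un qA x)"
proof -
  have "frm (qA + qB) (shift_mat qA N) y x
      = (\<Sum>i<qB. \<Sum>j<qA+qB. y (qA + i) * x j * shift_mat qA N (qA + i) j)"
    unfolding frm_def by (rule sum_shift0) (simp add: shift_mat_def)
  also have "\<dots> = (\<Sum>i<qB. \<Sum>j<qB. y (qA + i) * x (qA + j) * shift_mat qA N (qA + i) (qA + j))"
    by (intro sum.cong refl sum_shift0) (simp add: shift_mat_def)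
  also have "\<dots> = frm qB N (un qA y) (un qA x)"
    by (simp add: frm_def un_def shift_mat_def)
  finally show ?thesis .
qed

lemma sum_if_less: "n \<le> p \<Longrightarrow> (\<Sum>j<p. if j < n then g j else 0) = (\<Sum>j<n. g j :: real)" for n p :: nat
proof -
  assume "n \<le> p"
  have "(\<Sum>j<p. if j < n then g j else 0) = (\<Sum>j\<in>{..<p} \<inter> {j. j < n}. g j)"
    by (subst sum.inter_restrict) auto
  also have "{..<p} \<inter> {j. j < n} = {..<n}" using \<open>n \<le> p\<close> by auto
  finally show ?thesis by simp
qed

locale adjctx =
  fixes qA qB :: nat and A B :: "mat list" and t :: nat
  assumes soA: "so_tuple qA A" and soB: "so_tuple qB B"
    and neA: "A \<noteq> []" and neB: "B \<noteq> []" and tA: "t < length A"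
begin

abbreviation "nA \<equiv> length A"
abbreviation "nB \<equiv> length B"
abbreviation "p \<equiv> nA + nB - 1"
abbreviation "q \<equiv> qA + qB"
abbreviation "C \<equiv> adj_at t qA A B"

definition inB :: "nat \<Rightarrow> bool" where "inB k \<longleftrightarrow> k = t \<or> nA \<le> k"
definition bidx :: "nat \<Rightarrow> nat" where "bidx k = (if k = t then 0 else k - nA + 1)"
definition bet :: "nat \<Rightarrow> nat" where "bet j = (if j = 0 then t else nA + j - 1)"

lemma nB1: "1 \<le> nB" using neB by (cases B) auto

lemma lenC: "length C = p"
  using nB1 by (simp add: adj_at_def)

lemma pA: "nA \<le> p" using nB1 by simp

lemma Cnth: "k < p \<Longrightarrow> C ! k = (\<lambda>i j. (if k < nA then (A!k) i j else 0)
     + (if inB k then shift_mat qA (B ! bidx k) i j else 0))"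
proof -
  assume kp: "k < p"
  show ?thesis
  proof (cases "k < nA")
    case True
    show ?thesis
    proof (cases "k = t")
      case True
      have "C ! t = mat_add (A!t) (shift_mat qA (hd B))" using tA by (simp add: adj_at_def nth_append)
      moreover have "hd B = B ! 0" using neB by (simp add: hd_conv_nth)
      ultimately show ?thesis using \<open>k = t\<close> tA by (simp add: mat_add_def inB_def bidx_def)
    next
      case False
      then show ?thesis using \<open>k < nA\<close> tA
        by (simp add: adj_at_def nth_append inB_def)
    qed
  next
    case False
    then have "k \<noteq> t" using tA by auto
    have "tl B ! (k - nA) = B ! (k - nA + 1)" using kp False by (simp add: nth_tl)
    then show ?thesis using False kp \<open>k \<noteq> t\<close> neB
      by (auto simp: adj_at_def nth_append inB_def bidx_def)
  qed
qed

lemma isoA: "k < nA \<Longrightarrow> is_so qA (A!k)" using soA unfolding so_tuple_def by simp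
lemma isoB: "j < nB \<Longrightarrow> is_so qB (B!j)" using soB unfolding so_tuple_def by simp
lemma Azero: "k < nA \<Longrightarrow> qA \<le> i \<or> qA \<le> j \<Longrightarrow> (A!k) i j = 0"
  using is_so_zero isoA by blast
lemma Bzero: "k < nB \<Longrightarrow> qB \<le> i \<or> qB \<le> j \<Longrightarrow> (B!k) i j = 0"
  using is_so_zero isoB by blast
lemma Askew: "k < nA \<Longrightarrow> (A!k) i j = - (A!k) j i"
  using is_so_skew isoA by blast
lemma Bskew: "k < nB \<Longrightarrow> (B!k) i j = - (B!k) j i"
  using is_so_skew isoB by blast

lemma bidx_lt: "k < p \<Longrightarrow> inB k \<Longrightarrow> bidx k < nB"
proof -
  assume "k < p" "inB k"
  show "bidx k < nB"
  proof (cases "k = t")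
    case True then show ?thesis using neB by (simp add: bidx_def)
  next
    case False then show ?thesis using \<open>k < p\<close> \<open>inB k\<close> by (simp add: bidx_def inB_def)
  qed
qed

lemma fC: "k < p \<Longrightarrow> frm q (C!k) y x = (if k < nA then frm qA (A!k) y x else 0)
     + (if inB k then frm qB (B ! bidx k) (un qA y) (un qA x) else 0)"
proof -
  assume kp: "k < p"
  have "frm q (C!k) y x = frm q (\<lambda>i j. if k < nA then (A!k) i j else 0) y x
      + frm q (\<lambda>i j. if inB k then shift_mat qA (B ! bidx k) i j else 0) y x"
    unfolding Cnth[OF kp] by (rule frm_matadd)
  also have "frm q (\<lambda>i j. if k < nA then (A!k) i j else 0) y x = (if k < nA then frm qA (A!k) y x else 0)"
  proof (cases "k < nA")
    case True
    have "(\<lambda>i j. if k < nA then (A!k) i j else 0) = A!k" using True by simp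
    then show ?thesis using True frm_A[OF isoA[OF True]] by simp
  qed (simp add: frm_def)
  also have "frm q (\<lambda>i j. if inB k then shift_mat qA (B ! bidx k) i j else 0) y x
      = (if inB k then frm qB (B ! bidx k) (un qA y) (un qA x) else 0)"
  proof (cases "inB k")
    case True
    have "(\<lambda>i j. if inB k then shift_mat qA (B ! bidx k) i j else 0) = shift_mat qA (B ! bidx k)"
      using True by simp
    then show ?thesis using True frm_B by simp
  qed (simp add: frm_def)
  finally show ?thesis .
qed

lemma bet_props: "j < nB \<Longrightarrow> bet j < p \<and> inB (bet j) \<and> bidx (bet j) = j \<and> (bet j < nA \<longleftrightarrow> j = 0)"
proof -
  assume j: "j < nB"
  have tp: "t < p" using tA pA by linarith
  show ?thesis
  proof (cases "j = 0")
    case True then show ?thesis using tA tp by (simp add: bet_def inB_def bidx_def)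
  next
    case False then show ?thesis using j tA by (auto simp: bet_def inB_def bidx_def)
  qed
qed

lemma reindexB: "(\<Sum>k<p. if inB k then g k else 0) = (\<Sum>j<nB. g (bet j) :: real)"
proof -
  have "(\<Sum>k<p. if inB k then g k else 0) = (\<Sum>k\<in>{..<p} \<inter> {k. inB k}. g k)"
    by (subst sum.inter_restrict) auto
  also have "{..<p} \<inter> {k. inB k} = bet ` {..<nB}"
  proof (intro equalityI subsetI)
    fix k assume "k \<in> {..<p} \<inter> {k. inB k}"
    then have k: "k < p" "inB k" by auto
    show "k \<in> bet ` {..<nB}"
    proof (cases "k = t")
      case True
      then show ?thesis using nB1 by (intro image_eqI[of _ _ 0]) (auto simp: bet_def)
    next
      case False
      then have "nA \<le> k" using k(2) by (simp add: inB_def)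
      then show ?thesis using k(1) by (intro image_eqI[of _ _ "k - nA + 1"]) (auto simp: bet_def)
    qed
  next
    fix k assume "k \<in> bet ` {..<nB}"
    then show "k \<in> {..<p} \<inter> {k. inB k}" using bet_props by auto
  qed
  also have "sum g (bet ` {..<nB}) = (\<Sum>j<nB. g (bet j))"
  proof (rule sum.reindex[unfolded comp_def])
    show "inj_on bet {..<nB}" using tA by (auto simp: inj_on_def bet_def split: if_splits)
  qed
  finally show ?thesis .
qed

lemma soC: "so_tuple q C"
  unfolding so_tuple_def
proof
  fix M assume "M \<in> set C"
  then obtain k where k: "k < p" "M = C ! k" using lenC by (metis in_set_conv_nth)
  show "is_so q M"
    unfolding is_so_def k(2) Cnth[OF k(1)]
  proof (intro conjI allI impI)
    fix i j
    show "(if k < nA then (A!k) i j else 0) + (if inB k then shift_mat qA (B ! bidx k) i j else 0)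
        = - ((if k < nA then (A!k) j i else 0) + (if inB k then shift_mat qA (B ! bidx k) j i else 0))"
      using Askew[of k i j] Bskew[OF bidx_lt[OF k(1)], of "i - qA" "j - qA"] by (auto simp: shift_mat_def)
  next
    fix i j assume h: "q \<le> i \<or> q \<le> j"
    then have hB: "qB \<le> i - qA \<or> qB \<le> j - qA" "qA \<le> i \<or> qA \<le> j" by auto
    then show "(if k < nA then (A!k) i j else 0) + (if inB k then shift_mat qA (B ! bidx k) i j else 0) = 0"
      using Azero[of k i j] Bzero[OF bidx_lt[OF k(1)], of "i - qA" "j - qA"]
      by (simp add: shift_mat_def)
  qed
qed

lemma neC: "C \<noteq> []" using lenC tA pA by auto

lemma liC:
  assumes liA: "lin_indep_tuple A" and liB: "lin_indep_tuple B"
  shows "lin_indep_tuple C"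
  unfolding lin_indep_tuple_def lenC
proof (intro allI impI)
  fix c :: "nat \<Rightarrow> real" and k
  assume h: "\<forall>i j. (\<Sum>k<p. c k * (C ! k) i j) = 0" and kp: "k < p"
  have ent: "(\<Sum>k<p. c k * (C ! k) i j) = (\<Sum>k<p. c k * ((if k < nA then (A!k) i j else 0)
     + (if inB k then shift_mat qA (B ! bidx k) i j else 0)))" for i j
    by (intro sum.cong refl) (simp add: Cnth)
  have cA: "c k = 0" if "k < nA" for k
  proof -
    have "\<forall>i j. (\<Sum>k<nA. c k * (A!k) i j) = 0"
    proof (intro allI)
      fix i j
      show "(\<Sum>k<nA. c k * (A!k) i j) = 0"
      proof (cases "i < qA \<and> j < qA")
        case True
        have "(\<Sum>k<p. c k * (C ! k) i j) = (\<Sum>k<p. if k < nA then c k * (A!k) i j else 0)"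
          unfolding ent using True by (intro sum.cong refl) (auto simp: shift_mat_def)
        also have "\<dots> = (\<Sum>k<nA. c k * (A!k) i j)" by (rule sum_if_less) (rule pA)
        finally show ?thesis using h by simp
      next
        case False
        then show ?thesis using Azero by (auto intro!: sum.neutral)
      qed
    qed
    then show ?thesis using liA that unfolding lin_indep_tuple_def by blast
  qed
  have cB: "c (bet j) = 0" if "j < nB" for j
  proof -
    have "\<forall>i j. (\<Sum>j'<nB. c (bet j') * (B!j') i j) = 0"
    proof (intro allI)
      fix i j
      have "(\<Sum>k<p. c k * (C ! k) (qA + i) (qA + j)) = (\<Sum>k<p. if inB k then c k * (B ! bidx k) i j else 0)"
        unfolding ent using cA Azero by (intro sum.cong refl) (auto simp: shift_mat_def)
      also have "\<dots> = (\<Sum>j'<nB. c (bet j') * (B ! bidx (bet j')) i j)" by (rule reindexB)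
      also have "\<dots> = (\<Sum>j'<nB. c (bet j') * (B!j') i j)" by (intro sum.cong refl) (simp add: bet_props)
      finally show "(\<Sum>j'<nB. c (bet j') * (B!j') i j) = 0" using h by simp
    qed
    then show ?thesis using liB[unfolded lin_indep_tuple_def, rule_format, of "\<lambda>j'. c (bet j')"] that
      by blast
  qed
  show "c k = 0"
  proof (cases "k < nA")
    case True then show ?thesis by (rule cA)
  next
    case False
    then have "k = bet (k - nA + 1)" "k - nA + 1 < nB" using kp by (auto simp: bet_def)
    then show ?thesis using cB by metis
  qed
qed

lemma kfC:
  assumes kA: "kfree qA A" and kB: "kfree qB B"
  shows "kfree q C"
  unfolding kfree_def lenC
proof (intro allI impI)
  fix v i assume h: "\<forall>k<p. \<forall>y. frm q (C!k) y v = 0" and iq: "i < q"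
  have a: "\<forall>i<qA. v i = 0"
  proof -
    have "\<forall>k<nA. \<forall>y. frm qA (A!k) y v = 0"
    proof (intro allI impI)
      fix k y assume k: "k < nA"
      have kp: "k < p" using k pA by linarith
      have "frm q (C!k) (vp qA y) v = frm qA (A!k) y v"
        using k by (simp add: fC[OF kp] frm_zero1 un_vp0 frm_vp1[of qA])
      then show "frm qA (A!k) y v = 0" using h kp by simp
    qed
    then show ?thesis using kA unfolding kfree_def by blast
  qed
  have b: "\<forall>i<qB. un qA v i = 0"
  proof -
    have "\<forall>j<nB. \<forall>y. frm qB (B!j) y (un qA v) = 0"
    proof (intro allI impI)
      fix j y assume j: "j < nB"
      have "frm q (C!bet j) (sh qA y) v = frm qB (B!j) y (un qA v)"
        using j bet_props[OF j] by (simp add: fC frm_zero1 sh_low)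
      then show "frm qB (B!j) y (un qA v) = 0" using h bet_props[OF j] by simp
    qed
    then show ?thesis using kB unfolding kfree_def by blast
  qed
  show "v i = 0"
  proof (cases "i < qA")
    case True then show ?thesis using a by simp
  next
    case False
    then have "i = qA + (i - qA)" "i - qA < qB" using iq by auto
    then show ?thesis using b by (metis un_apply)
  qed
qed

end



context adjctx begin

lemma indC:
  assumes liA: "lin_indep_tuple A" and liB: "lin_indep_tuple B"
    and indA: "la_indecomposable qA A" and indB: "la_indecomposable qB B"
  shows "la_indecomposable q C"
proof (rule ccontr)
  assume "\<not> la_indecomposable q C"
  then obtain P where hp: "has_proj q C P" using decomp_to_proj by blast
  have kA: "kfree qA A" using indec_kfree[OF neA indA] .
  have kB: "kfree qB B" using indec_kfree[OF neB indB] .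
  obtain E M where es: "esplit0 q C E M" and n0: "\<exists>x. E x \<noteq> (\<lambda>_. 0)" and n1: "\<exists>x. E x \<noteq> vp q x"
    using proj_esplit[OF soC liC[OF liA liB] kfC[OF kA kB] hp] by blast
  have Ev: "\<And>x. E x = E (vp q x)" and vE: "\<And>x. vp q (E x) = E x"
    and Eadd: "\<And>x y. E (\<lambda>m. x m + y m) = (\<lambda>m. E x m + E y m)"
    and Esm: "\<And>a x. E (\<lambda>m. a * x m) = (\<lambda>m. a * E x m)"
    and Eid: "\<And>x. E (E x) = E x"
    and rel: "\<And>k x y. k < p \<Longrightarrow> frm q (C!k) y (E x) = (\<Sum>j<p. M k j * frm q (C!j) y x)"
    using es unfolding esplit0_def lenC by blast+
  have Eq: "E x m = 0" if "q \<le> m" for x m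
    using vE[of x] that by (metis vp_def not_le)
  have cross1: "frm q (C!k) y x = 0" if "k < p" "\<forall>i<qA. y i = 0" "\<forall>i<qB. x (qA + i) = 0" for k y x
    using that by (simp add: fC frm_zero1 frm_zero2 un_apply)
  have cross2: "frm q (C!k) y x = 0" if "k < p" "\<forall>i<qB. y (qA + i) = 0" "\<forall>i<qA. x i = 0" for k y x
    using that by (simp add: fC frm_zero1 frm_zero2 un_apply)
  have K2a: "E (vp qA x) i = 0" if "qA \<le> i" for x i
  proof (cases "i < q")
    case False then show ?thesis using Eq by simp
  next
    case True
    define v where "v = E (vp qA x)"
    have "\<forall>j<nB. \<forall>y. frm qB (B!j) y (un qA v) = 0"
    proof (intro allI impI)
      fix j y assume j: "j < nB"
      have bj: "bet j < p" "inB (bet j)" "bidx (bet j) = j" using bet_props[OF j] by auto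
      have "frm q (C ! bet j) (sh qA y) v = frm qB (B!j) y (un qA v)"
        using bj by (simp add: fC frm_zero1 sh_low)
      moreover have "frm q (C ! bet j) (sh qA y) v = (\<Sum>k<p. M (bet j) k * frm q (C!k) (sh qA y) (vp qA x))"
        unfolding v_def by (rule rel[OF bj(1)])
      moreover have "frm q (C!k) (sh qA y) (vp qA x) = 0" if "k < p" for k
        using that by (intro cross1) (auto simp: sh_low vp_def)
      ultimately show "frm qB (B!j) y (un qA v) = 0" by simp
    qed
    then have "\<forall>i<qB. un qA v i = 0" using kB unfolding kfree_def by blast
    moreover have "i = qA + (i - qA)" "i - qA < qB" using that True by auto
    ultimately show ?thesis unfolding v_def by (metis un_apply)
  qed
  have K2b: "E x i = 0" if x: "\<forall>i<qA. x i = 0" and i: "i < qA" for x i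
  proof -
    have "\<forall>k<nA. \<forall>y. frm qA (A!k) y (E x) = 0"
    proof (intro allI impI)
      fix k y assume k: "k < nA"
      have kp: "k < p" using k pA by linarith
      have "frm q (C!k) (vp qA y) (E x) = frm qA (A!k) y (E x)"
        using k by (simp add: fC[OF kp] frm_zero1 un_vp0 frm_vp1[of qA])
      moreover have "frm q (C!k) (vp qA y) (E x) = (\<Sum>j<p. M k j * frm q (C!j) (vp qA y) x)"
        by (rule rel[OF kp])
      moreover have "frm q (C!j) (vp qA y) x = 0" if "j < p" for j
        using that x by (intro cross2) (auto simp: vp_def)
      ultimately show "frm qA (A!k) y (E x) = 0" by simp
    qed
    then show ?thesis using kA i unfolding kfree_def by blast
  qed
  have Ew: "E w = sh qA (vp qB (un qA (E w)))" if w: "\<forall>i<qA. w i = 0" for w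
  proof (rule ext)
    fix i show "E w i = sh qA (vp qB (un qA (E w))) i"
    proof (cases "i < qA")
      case True then show ?thesis using K2b[OF w True] by (simp add: sh_low)
    next
      case False then show ?thesis using Eq[of i w] by (auto simp: sh_def vp_def un_def)
    qed
  qed
  define EA where "EA x = E (vp qA x)" for x
  have vEA: "vp qA (EA x) = EA x" for x
  proof (rule ext)
    fix i
    have "vp qA (EA x) i = (if i < qA then EA x i else 0)" by (simp add: vp_def)
    then show "vp qA (EA x) i = EA x i" using K2a[where i=i and x=x] unfolding EA_def by auto
  qed
  have esA: "esplit0 qA A EA M"
    unfolding esplit0_def
  proof (intro conjI allI impI)
    fix x
    show "EA x = EA (vp qA x)" by (simp add: EA_def)
    show "vp qA (EA x) = EA x" by (rule vEA)
    show "EA (EA x) = EA x" using vEA[of x] Eid by (simp add: EA_def)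
  next
    fix x y show "EA (\<lambda>m. x m + y m) = (\<lambda>m. EA x m + EA y m)"
      by (simp add: EA_def vp_add Eadd)
  next
    fix a x show "EA (\<lambda>m. a * x m) = (\<lambda>m. a * EA x m)"
      by (simp add: EA_def vp_smul Esm)
  next
    fix k x y assume k: "k < nA"
    have kp: "k < p" using k pA by linarith
    have "frm qA (A!k) y (EA x) = frm q (C!k) (vp qA y) (EA x)"
      using k by (simp add: fC[OF kp] frm_zero1 un_vp0 frm_vp1[of qA])
    also have "\<dots> = (\<Sum>j<p. M k j * frm q (C!j) (vp qA y) (vp qA x))"
      unfolding EA_def by (rule rel[OF kp])
    also have "\<dots> = (\<Sum>j<p. if j < nA then M k j * frm qA (A!j) y x else 0)"
    proof (intro sum.cong refl)
      fix j assume "j \<in> {..<p}"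
      then have jp: "j < p" by simp
      show "M k j * frm q (C!j) (vp qA y) (vp qA x) = (if j < nA then M k j * frm qA (A!j) y x else 0)"
        by (simp add: fC[OF jp] frm_zero1 un_vp0 frm_vp1[of qA] frm_vp2[of qA])
    qed
    also have "\<dots> = (\<Sum>j<nA. M k j * frm qA (A!j) y x)" by (rule sum_if_less[OF pA])
    finally show "frm qA (A!k) y (EA x) = (\<Sum>j<nA. M k j * frm qA (A!j) y x)" .
  qed
  define EB where "EB x = un qA (E (sh qA (vp qB x)))" for x
  define MB where "MB j j' = M (bet j) (bet j')" for j j'
  have vEB: "vp qB (EB x) = EB x" for x
    unfolding EB_def by (auto simp: vp_def un_def Eq fun_eq_iff)
  have esB: "esplit0 qB B EB MB"
    unfolding esplit0_def
  proof (intro conjI allI impI)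
    fix x
    show "EB x = EB (vp qB x)" by (simp add: EB_def)
    show "vp qB (EB x) = EB x" by (rule vEB)
    have "sh qA (vp qB (un qA (E (sh qA (vp qB x))))) = E (sh qA (vp qB x))"
      using Ew[of "sh qA (vp qB x)"] by (simp add: sh_low)
    then show "EB (EB x) = EB x" using Eid by (simp add: EB_def)
  next
    fix x y show "EB (\<lambda>m. x m + y m) = (\<lambda>m. EB x m + EB y m)"
      by (simp add: EB_def vp_add sh_add Eadd un_add)
  next
    fix a x show "EB (\<lambda>m. a * x m) = (\<lambda>m. a * EB x m)"
      by (simp add: EB_def vp_smul sh_smul Esm un_smul)
  next
    fix j x y assume j: "j < nB"
    have bj: "bet j < p" "inB (bet j)" "bidx (bet j) = j" using bet_props[OF j] by auto
    have "frm qB (B!j) y (EB x) = frm q (C ! bet j) (sh qA y) (E (sh qA (vp qB x)))"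
      using bj by (simp add: fC frm_zero1 sh_low EB_def)
    also have "\<dots> = (\<Sum>k<p. M (bet j) k * frm q (C!k) (sh qA y) (sh qA (vp qB x)))"
      by (rule rel[OF bj(1)])
    also have "\<dots> = (\<Sum>k<p. if inB k then M (bet j) k * frm qB (B ! bidx k) y x else 0)"
    proof (intro sum.cong refl)
      fix k assume "k \<in> {..<p}"
      then have kp: "k < p" by simp
      show "M (bet j) k * frm q (C!k) (sh qA y) (sh qA (vp qB x))
          = (if inB k then M (bet j) k * frm qB (B ! bidx k) y x else 0)"
        by (simp add: fC[OF kp] frm_zero1 sh_low frm_vp2[of qB])
    qed
    also have "\<dots> = (\<Sum>j'<nB. M (bet j) (bet j') * frm qB (B ! bidx (bet j')) y x)"
      by (rule reindexB)
    also have "\<dots> = (\<Sum>j'<nB. MB j j' * frm qB (B ! j') y x)"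
      by (intro sum.cong refl) (simp add: bet_props MB_def)
    finally show "frm qB (B!j) y (EB x) = (\<Sum>j'<nB. MB j j' * frm qB (B ! j') y x)" .
  qed
  have trA: "(\<forall>x. EA x = (\<lambda>_. 0)) \<or> (\<forall>x. EA x = vp qA x)"
    by (rule esplit_triv[OF soA liA indA esA])
  have trB: "(\<forall>x. EB x = (\<lambda>_. 0)) \<or> (\<forall>x. EB x = vp qB x)"
    by (rule esplit_triv[OF soB liB indB esB])
  have relA: "frm qA (A!t) y (EA x) = (\<Sum>j<nA. M t j * frm qA (A!j) y x)" for x y
    using esA tA unfolding esplit0_def by blast
  have nB0: "0 < nB" using neB by simp
  have relB: "frm qB (B!0) y (EB x) = (\<Sum>j<nB. M t (bet j) * frm qB (B!j) y x)" for x y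
  proof -
    have "frm qB (B!0) y (EB x) = (\<Sum>j<nB. MB 0 j * frm qB (B!j) y x)"
      using esB nB0 unfolding esplit0_def by blast
    then show ?thesis by (simp add: MB_def bet_def)
  qed
  have tnA: "t < nA" by (rule tA)
  have A0: "M t t = 0" if "\<forall>x. EA x = (\<lambda>_. 0)"
  proof (rule lin_indep_frm[OF soA liA _ tnA, where c="M t"])
    fix x y show "(\<Sum>j<nA. M t j * frm qA (A!j) y x) = 0"
      using relA[of y x] that by (simp add: frm_zero2)
  qed
  have A1: "M t t = 1" if "\<forall>x. EA x = vp qA x"
  proof -
    have "M t t - (if t = t then 1 else 0) = 0"
    proof (rule lin_indep_frm[OF soA liA _ tnA, where c="\<lambda>j. M t j - (if j = t then 1 else 0)"])
      fix x y
      have "\<And>j. (M t j - (if j = t then 1 else 0)) * frm qA (A!j) y x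
             = M t j * frm qA (A!j) y x - (if j = t then frm qA (A!j) y x else 0)"
        by (simp add: left_diff_distrib)
      then have "(\<Sum>j<nA. (M t j - (if j = t then 1 else 0)) * frm qA (A!j) y x)
          = (\<Sum>j<nA. M t j * frm qA (A!j) y x) - (\<Sum>j<nA. if j = t then frm qA (A!j) y x else 0)"
        by (simp add: sum_subtractf)
      also have "\<dots> = 0" using relA[of y x] that tnA by (simp add: sum.delta)
      finally show "(\<Sum>j<nA. (M t j - (if j = t then 1 else 0)) * frm qA (A!j) y x) = 0" .
    qed
    then show ?thesis by simp
  qed
  have B0: "M t t = 0" if "\<forall>x. EB x = (\<lambda>_. 0)"
  proof -
    have "M t (bet 0) = 0"
    proof (rule lin_indep_frm[OF soB liB _ nB0, where c="\<lambda>j. M t (bet j)"])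
      fix x y show "(\<Sum>j<nB. M t (bet j) * frm qB (B!j) y x) = 0"
        using relB[of y x] that by (simp add: frm_zero2)
    qed
    then show ?thesis by (simp add: bet_def)
  qed
  have B1: "M t t = 1" if "\<forall>x. EB x = vp qB x"
  proof -
    have "M t (bet 0) - (if (0::nat) = 0 then 1 else 0) = 0"
    proof (rule lin_indep_frm[OF soB liB _ nB0, where c="\<lambda>j. M t (bet j) - (if j = 0 then 1 else 0)"])
      fix x y
      have "\<And>j. (M t (bet j) - (if j = 0 then 1 else 0)) * frm qB (B!j) y x
             = M t (bet j) * frm qB (B!j) y x - (if j = 0 then frm qB (B!j) y x else 0)"
        by (simp add: left_diff_distrib)
      then have "(\<Sum>j<nB. (M t (bet j) - (if j = 0 then 1 else 0)) * frm qB (B!j) y x)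
          = (\<Sum>j<nB. M t (bet j) * frm qB (B!j) y x) - (\<Sum>j<nB. if j = 0 then frm qB (B!j) y x else 0)"
        by (simp add: sum_subtractf)
      also have "\<dots> = 0" using relB[of y x] that nB0 by (simp add: sum.delta)
      finally show "(\<Sum>j<nB. (M t (bet j) - (if j = 0 then 1 else 0)) * frm qB (B!j) y x) = 0" .
    qed
    then show ?thesis by (simp add: bet_def)
  qed
  have Edec: "E x = (\<lambda>m. EA x m + sh qA (vp qB (EB (un qA x))) m)" for x
  proof -
    define w where "w = sh qA (vp qB (un qA x))"
    have "E x = E (\<lambda>m. vp qA x m + w m)" unfolding w_def using Ev[of x] vp_split[of qA qB x] by simp
    also have "\<dots> = (\<lambda>m. EA x m + E w m)" by (simp add: Eadd EA_def)
    also have "E w = sh qA (vp qB (un qA (E w)))" by (rule Ew) (simp add: w_def sh_low)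
    also have "un qA (E w) = EB (un qA x)" by (simp add: EB_def w_def)
    finally show ?thesis .
  qed
  show False
  proof (cases "\<forall>x. EA x = (\<lambda>_. 0)")
    case True
    then have "M t t = 0" by (rule A0)
    then have "\<not> (\<forall>x. EB x = vp qB x)" using B1 by auto
    then have "\<forall>x. EB x = (\<lambda>_. 0)" using trB by blast
    then have "E x = (\<lambda>_. 0)" for x using True Edec[of x] by (simp add: sh_def vp_def)
    then show False using n0 by blast
  next
    case False
    then have EA1: "\<forall>x. EA x = vp qA x" using trA by blast
    then have "M t t = 1" by (rule A1)
    then have "\<not> (\<forall>x. EB x = (\<lambda>_. 0))" using B0 by auto
    then have "\<forall>x. EB x = vp qB x" using trB by blast
    then have "E x = vp q x" for x using EA1 Edec[of x] vp_split[of qA qB x] by simp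
    then show False using n1 by blast
  qed
qed

end



lemma adj_main:
  assumes "so_tuple qA A" "so_tuple qB B" "A \<noteq> []" "B \<noteq> []" "t < length A"
    and "lin_indep_tuple A" "lin_indep_tuple B" "la_indecomposable qA A" "la_indecomposable qB B"
  shows "so_tuple (qA + qB) (adj_at t qA A B) \<and> adj_at t qA A B \<noteq> []
    \<and> lin_indep_tuple (adj_at t qA A B) \<and> la_indecomposable (qA + qB) (adj_at t qA A B)
    \<and> length A \<le> length (adj_at t qA A B)"
proof -
  interpret adjctx qA qB A B t using assms by unfold_locales
  show ?thesis using soC neC liC indC lenC pA assms by simp
qed

definition invt :: "nat \<times> mat list \<Rightarrow> bool" where
  "invt x \<longleftrightarrow> so_tuple (fst x) (snd x) \<and> snd x \<noteq> [] \<and> lin_indep_tuple (snd x) \<and> la_indecomposable (fst x) (snd x)"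

lemma adjoin_eq: "A \<noteq> [] \<Longrightarrow> adjoin q A B = adj_at (length A - 1) q A B"
proof -
  assume "A \<noteq> []"
  then obtain xs a where A: "A = xs @ [a]" by (metis rev_exhaust)
  show ?thesis unfolding A adjoin_def adj_at_def by (simp add: list_update_append)
qed

lemma iter_inv:
  "invt acc \<Longrightarrow> \<forall>x\<in>set xs. invt x \<Longrightarrow> invt (foldl (\<lambda>(q, C) (q', B). (q + q', adjoin q C B)) acc xs)"
proof (induction xs arbitrary: acc)
  case Nil
  then show ?case by simp
next
  case (Cons x xs)
  obtain q C where acc: "acc = (q, C)" by fastforce
  obtain q' B where x: "x = (q', B)" by fastforce
  have iC: "so_tuple q C" "C \<noteq> []" "lin_indep_tuple C" "la_indecomposable q C"
    using Cons.prems(1) acc by (auto simp: invt_def)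
  have iB: "so_tuple q' B" "B \<noteq> []" "lin_indep_tuple B" "la_indecomposable q' B"
    using Cons.prems(2) x by (auto simp: invt_def)
  have "invt (q + q', adjoin q C B)"
    using adj_main[OF iC(1) iB(1) iC(2) iB(2) _ iC(3) iB(3) iC(4) iB(4), of "length C - 1"] iC(2)
    by (simp add: invt_def adjoin_eq)
  then show ?case using Cons.IH Cons.prems(2) acc x by simp
qed

lemma take_snoc_le: "l \<le> length Ds \<Longrightarrow> take l (Ds @ [D]) = take l Ds"
  by simp

lemma multi_nil: "A \<noteq> [] \<Longrightarrow> multi_adjoin q0 A [] = A"
  by (simp add: multi_adjoin_def)

lemma multi_snoc:
  assumes "A \<noteq> []"
  shows "multi_adjoin q0 A (Ds @ [D])
    = adj_at (length A - 1) (q0 + sum_list (map fst Ds)) (multi_adjoin q0 A Ds) (snd D)"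
proof -
  let ?n = "length Ds"
  let ?off = "madj_offset q0 Ds"
  have off: "madj_offset q0 (Ds @ [D]) l = ?off l" if "l \<le> ?n" for l
    using that by (simp add: madj_offset_def)
  have offn: "?off ?n = q0 + sum_list (map fst Ds)" by (simp add: madj_offset_def)
  define g where "g = (\<lambda>i j. last A i j + (\<Sum>l<?n. shift_mat (?off l) (hd (snd (Ds ! l))) i j))"
  define T where "T = concat (map (\<lambda>l. map (shift_mat (?off l)) (tl (snd (Ds ! l)))) [0..<?n])"
  have R: "multi_adjoin q0 A Ds = butlast A @ [g] @ T"
    by (simp add: multi_adjoin_def g_def T_def)
  have g': "(\<lambda>i j. last A i j + (\<Sum>l<length (Ds @ [D]). shift_mat (madj_offset q0 (Ds @ [D]) l)
        (hd (snd ((Ds @ [D]) ! l))) i j)) = mat_add g (shift_mat (q0 + sum_list (map fst Ds)) (hd (snd D)))"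
  proof -
    have "\<And>l. l < ?n \<Longrightarrow> shift_mat (madj_offset q0 (Ds @ [D]) l) (hd (snd ((Ds @ [D]) ! l)))
        = shift_mat (?off l) (hd (snd (Ds ! l)))"
      by (simp add: off nth_append)
    then show ?thesis
      by (simp add: g_def mat_add_def off offn add.assoc)
  qed
  have T': "concat (map (\<lambda>l. map (shift_mat (madj_offset q0 (Ds @ [D]) l)) (tl (snd ((Ds @ [D]) ! l))))
        [0..<length (Ds @ [D])]) = T @ map (shift_mat (q0 + sum_list (map fst Ds))) (tl (snd D))"
  proof -
    define f' where "f' = (\<lambda>l. map (shift_mat (madj_offset q0 (Ds @ [D]) l)) (tl (snd ((Ds @ [D]) ! l))))"
    define f where "f = (\<lambda>l. map (shift_mat (?off l)) (tl (snd (Ds ! l))))"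
    have e: "map f' [0..<?n] = map f [0..<?n]"
    proof (rule map_cong[OF refl])
      fix l assume "l \<in> set [0..<?n]"
      then have l: "l < ?n" by simp
      then show "f' l = f l" using off[of l] by (simp add: nth_append f'_def f_def)
    qed
    have fn: "f' ?n = map (shift_mat (q0 + sum_list (map fst Ds))) (tl (snd D))"
      by (simp add: f'_def off offn)
    have "concat (map f' [0..<length (Ds @ [D])]) = concat (map f' [0..<?n]) @ f' ?n" by simp
    also have "\<dots> = T @ map (shift_mat (q0 + sum_list (map fst Ds))) (tl (snd D))"
      unfolding e fn T_def f_def by simp
    finally show ?thesis unfolding f'_def .
  qed
  have lb: "length (butlast A) = length A - 1" by simp
  show ?thesis
    unfolding R adj_at_def
    apply (simp only: multi_adjoin_def g' T')
    using lb by (simp add: list_update_append nth_append)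
qed

lemma multi_inv:
  assumes "invt (q0, A)" "\<forall>x\<in>set Ds. invt x"
  shows "invt (q0 + sum_list (map fst Ds), multi_adjoin q0 A Ds) \<and> length A \<le> length (multi_adjoin q0 A Ds)"
  using assms(2)
proof (induction Ds rule: rev_induct)
  case Nil
  then show ?case using assms(1) multi_nil by (simp add: invt_def)
next
  case (snoc D Ds)
  obtain q' B where D: "D = (q', B)" by fastforce
  let ?R = "multi_adjoin q0 A Ds"
  let ?qR = "q0 + sum_list (map fst Ds)"
  have IH: "invt (?qR, ?R)" "length A \<le> length ?R" using snoc by auto
  have iR: "so_tuple ?qR ?R" "?R \<noteq> []" "lin_indep_tuple ?R" "la_indecomposable ?qR ?R"
    using IH(1) by (auto simp: invt_def)
  have iB: "so_tuple q' B" "B \<noteq> []" "lin_indep_tuple B" "la_indecomposable q' B"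
    using snoc.prems D by (auto simp: invt_def)
  have neA: "A \<noteq> []" using assms(1) by (simp add: invt_def)
  have t: "length A - 1 < length ?R" using IH(2) neA by (cases A) auto
  have m: "multi_adjoin q0 A (Ds @ [D]) = adj_at (length A - 1) ?qR ?R B"
    using multi_snoc[OF neA] D by simp
  show ?case
    using adj_main[OF iR(1) iB(1) iR(2) iB(2) t iR(3) iB(3) iR(4) iB(4)] IH(2) m D
    by (simp add: invt_def add.assoc)
qed

theorem mainTheorem11:
  fixes As :: "(nat \<times> mat list) list"
  assumes "As \<noteq> []"
    and "\<forall>(q, A) \<in> set As. so_tuple q A \<and> A \<noteq> [] \<and> lin_indep_tuple A \<and> la_indecomposable q A"
  shows "la_indecomposable (fst (iter_adjoin As)) (snd (iter_adjoin As))
       \<and> la_indecomposable (fst (hd As) + sum_list (map fst (tl As)))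
            (multi_adjoin (fst (hd As)) (snd (hd As)) (tl As))"
proof -
  have all: "\<forall>x\<in>set As. invt x" using assms(2) by (auto simp: invt_def)
  have h: "invt (hd As)" using all assms(1) by simp
  have tl: "\<forall>x\<in>set (tl As). invt x" using all by (simp add: list.set_sel(2) assms(1))
  have "invt (iter_adjoin As)" unfolding iter_adjoin_def by (rule iter_inv[OF h tl])
  moreover have "invt (fst (hd As) + sum_list (map fst (tl As)), multi_adjoin (fst (hd As)) (snd (hd As)) (tl As))"
    using multi_inv[of "fst (hd As)" "snd (hd As)" "tl As"] h tl by simp
  ultimately show ?thesis by (simp add: invt_def)
qed

end
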